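(* Let $(\hat\sigma(n))_{n\ge0}$ be defined by $\hat\sigma(0)=1$, $\hat\sigma(1)=-\tfrac13$, and for $n\ge1$: $\hat\sigma(2n)=\hat\sigma(n)$, $\hat\sigma(2n+1)=-\tfrac12(\hat\sigma(n)+\hat\sigma(n+1))$. Let $K,L\ge9$ be odd natural numbers. If $K$ and $L$ are TM-equivalent, then $l(K)=l(L)$.
   Context: Two numbers $K,L\ge0$ are TM-equivalent if $\hat\sigma(2K+1)=\hat\sigma(2L+1)$. For odd $K$, $l(K)=a_1+\dots+a_r$ where $K_0=K$, $K_{i-1}=2^{a_i}K_i+1$ with $K_i$ odd, $a_i\ge1$, and $K_r=1$; equivalently $l(K)=\lfloor\log_2K\rfloor$. *)

theory Defs
  imports Complex_Main
begin

function sigma_hat :: "nat \<Rightarrow> real" where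
  "sigma_hat 0 = 1"
| "sigma_hat (Suc 0) = -1/3"
| "sigma_hat (Suc (Suc n)) =
     (if even n then sigma_hat (Suc (n div 2))
      else - (sigma_hat (Suc (n div 2)) + sigma_hat (Suc (Suc (n div 2)))) / 2)"
  by pat_completeness auto
termination
  by (relation "measure id") (auto elim!: oddE)

definition TM_equiv :: "nat \<Rightarrow> nat \<Rightarrow> bool" where
  "TM_equiv K L \<longleftrightarrow> sigma_hat (2*K+1) = sigma_hat (2*L+1)"

definition ell :: "nat \<Rightarrow> nat" where
  "ell K = nat \<lfloor>log 2 (real K)\<rfloor>"


end

theory Submission
  imports Defs
begin

lemma sh_even: "m \<ge> 1 \<Longrightarrow> sigma_hat (2*m) = sigma_hat m"
proof -
  assume "m \<ge> 1"
  then obtain k where k: "m = Suc k" by (cases m) auto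
  have "2*m = Suc (Suc (2*k))" using k by simp
  then show ?thesis using k by simp
qed

lemma sh_odd: "m \<ge> 1 \<Longrightarrow> sigma_hat (2*m+1) = - (sigma_hat m + sigma_hat (m+1)) / 2"
proof -
  assume "m \<ge> 1"
  then obtain k where k: "m = Suc k" by (cases m) auto
  have "2*m+1 = Suc (Suc (2*k+1))" using k by simp
  moreover have "(2*k+1) div 2 = k" by simp
  ultimately show ?thesis using k by simp
qed

lemma half_bounds:
  fixes n P :: nat
  shows "2*P \<le> n \<Longrightarrow> P \<le> n div 2" and "n < 2*P \<Longrightarrow> n div 2 < P"
proof -
  have "n = 2*(n div 2) + n mod 2" by simp
  moreover have "n mod 2 < 2" by simp
  ultimately show "2*P \<le> n \<Longrightarrow> P \<le> n div 2" and "n < 2*P \<Longrightarrow> n div 2 < P" by linarith+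
qed

lemma key:
  "2^(k+2) \<le> n \<Longrightarrow> n < 2^(k+3) \<Longrightarrow>
   \<exists>a c :: int. odd a \<and> odd c \<and>
     3*(sigma_hat n + sigma_hat (Suc n)) * 2^k = of_int a \<and>
     3*(sigma_hat n - sigma_hat (Suc n)) * 2^k = of_int c"
proof (induction k arbitrary: n)
  case 0
  then have "n = 4 \<or> n = 5 \<or> n = 6 \<or> n = 7" by auto
  have s2: "sigma_hat 2 = -1/3" using sh_even[of 1] by simp
  have s3: "sigma_hat 3 = 1/3" using sh_odd[of 1] s2 by simp
  have s4: "sigma_hat 4 = -1/3" using sh_even[of 2] s2 by simp
  have s5: "sigma_hat 5 = 0" using sh_odd[of 2] s2 s3 by simp
  have s6: "sigma_hat 6 = 1/3" using sh_even[of 3] s3 by simp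
  have s7: "sigma_hat 7 = 0" using sh_odd[of 3] s3 s4 by simp
  have s8: "sigma_hat 8 = -1/3" using sh_even[of 4] s4 by simp
  consider "n=4" | "n=5" | "n=6" | "n=7" using \<open>n = 4 \<or> _\<close> by blast
  then show ?case
  proof cases
    case 1 then show ?thesis using s4 s5 by (intro exI[of _ "-1"] exI[of _ "-1"]) simp
  next
    case 2 then show ?thesis using s5 s6 by (intro exI[of _ "1"] exI[of _ "-1"]) simp
  next
    case 3 then show ?thesis using s6 s7 by (intro exI[of _ "1"] exI[of _ "1"]) simp
  next
    case 4 then show ?thesis using s7 s8 by (intro exI[of _ "-1"] exI[of _ "1"]) simp
  qed
next
  case (Suc k)
  define m where "m = n div 2"
  have m1: "2^(k+2) \<le> m" using Suc.prems(1) unfolding m_def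
    by (intro half_bounds(1)) (simp add: power_Suc del: power_Suc2)
  have m2: "m < 2^(k+3)" using Suc.prems(2) unfolding m_def
    by (intro half_bounds(2)) (simp add: power_add)
  have mge: "m \<ge> 1" using m1 by (meson le_trans one_le_numeral one_le_power)
  obtain a c :: int where ac: "odd a" "odd c"
    "3*(sigma_hat m + sigma_hat (Suc m)) * 2^k = of_int a"
    "3*(sigma_hat m - sigma_hat (Suc m)) * 2^k = of_int c"
    using Suc.IH[OF m1 m2] by blast
  have o1: "sigma_hat (2*m+1) = - (sigma_hat m + sigma_hat (m+1)) / 2" using sh_odd[OF mge] .
  have e1: "sigma_hat (2*m) = sigma_hat m" using sh_even[OF mge] .
  have e2: "sigma_hat (2*m+2) = sigma_hat (m+1)" using sh_even[of "m+1"] by (simp add: algebra_simps)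
  have pk: "(2::real)^(Suc k) = 2 * 2^k" by simp
  consider "n = 2*m" | "n = 2*m+1" unfolding m_def by linarith
  then show ?case
  proof cases
    case 1
    have sn: "sigma_hat n = sigma_hat m" using 1 e1 by simp
    have sn1: "sigma_hat (Suc n) = - (sigma_hat m + sigma_hat (m+1)) / 2" using 1 o1 by simp
    have A: "3*(sigma_hat n + sigma_hat (Suc n)) * 2^Suc k = of_int c"
      unfolding sn sn1 pk ac(4)[symmetric] by (simp add: field_simps)
    have B: "3*(sigma_hat n - sigma_hat (Suc n)) * 2^Suc k = of_int (2*a + c)"
      unfolding sn sn1 pk of_int_add of_int_mult ac(3)[symmetric] ac(4)[symmetric] by (simp add: field_simps)
    show ?thesis using A B ac by (intro exI[of _ c] exI[of _ "2*a+c"]) simp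
  next
    case 2
    have sn: "sigma_hat n = - (sigma_hat m + sigma_hat (m+1)) / 2" using 2 o1 by simp
    have sn1: "sigma_hat (Suc n) = sigma_hat (m+1)" using 2 e2 by simp
    have A: "3*(sigma_hat n + sigma_hat (Suc n)) * 2^Suc k = of_int (-c)"
      unfolding sn sn1 pk of_int_minus ac(4)[symmetric] by (simp add: field_simps)
    have B: "3*(sigma_hat n - sigma_hat (Suc n)) * 2^Suc k = of_int (c - 2*a)"
      unfolding sn sn1 pk of_int_diff of_int_mult ac(3)[symmetric] ac(4)[symmetric] by (simp add: field_simps)
    show ?thesis using A B ac by (intro exI[of _ "-c"] exI[of _ "c-2*a"]) simp
  qed
qed

lemma val_form:
  assumes "K \<ge> 8"
  shows "\<exists>a::int. ell K \<ge> 3 \<and> odd a \<and> 3 * sigma_hat (2*K+1) * 2^(ell K - 1) = of_int a"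
proof -
  obtain e where e: "2^e \<le> K" "K < 2^(e+1)" using ex_power_ivl1[of 2 K] assms by auto
  have ell: "ell K = e"
  proof -
    have "floor (log 2 (real K)) = int e"
      using floor_log_nat_eq_powr_iff[of 2 K e] e assms by simp
    then show ?thesis unfolding ell_def by simp
  qed
  have "e \<ge> 3"
  proof (rule ccontr)
    assume "\<not> e \<ge> 3"
    then have "(2::nat)^(e+1) \<le> 2^3" by (intro power_increasing) auto
    then have "K < 2^3" using e(2) by linarith
    then show False using assms by simp
  qed
  define j where "j = e - 2"
  have j: "e = j + 2" using \<open>e \<ge> 3\<close> unfolding j_def by simp
  have e1: "2^(j+2) \<le> K" using e(1) unfolding j .
  have e2: "K < 2^(j+3)" using e(2) unfolding j by (simp add: power_add)
  obtain a c :: int where ac: "odd a" "3*(sigma_hat K + sigma_hat (Suc K)) * 2^j = of_int a"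
    using key[OF e1 e2] by blast
  have K1: "K \<ge> 1" using assms by simp
  have el: "ell K - 1 = Suc j" using ell j by simp
  have so: "sigma_hat (2*K+1) = - (sigma_hat K + sigma_hat (Suc K)) / 2"
    using sh_odd[OF K1] by simp
  have "3 * sigma_hat (2*K+1) * 2^(ell K - 1) = - (3*(sigma_hat K + sigma_hat (Suc K)) * 2^j)"
    unfolding el so by (simp add: field_simps)
  then have "3 * sigma_hat (2*K+1) * 2^(ell K - 1) = of_int (-a)"
    using ac(2) by simp
  then show ?thesis using ac(1) \<open>e \<ge> 3\<close> ell by (intro exI[of _ "-a"]) simp
qed

lemma pow_odd_aux:
  fixes a b :: int
  assumes "odd a" "a * 2^i = b * 2^(i + Suc d)"
  shows False
proof -
  have "b * 2^(i + Suc d) = (b * 2^Suc d) * 2^i" by (simp add: power_add mult_ac)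
  then have "a * 2^i = (b * 2^Suc d) * 2^i" using assms(2) by simp
  then have "a = b * 2^Suc d" by (metis mult_cancel_right power_not_zero zero_neq_numeral)
  then have "even a" by simp
  then show False using assms(1) by simp
qed

lemma pow_odd_eq:
  fixes a b :: int
  assumes "odd a" "odd b" "a * 2^i = b * 2^j"
  shows "i = j"
proof (rule ccontr)
  assume "i \<noteq> j"
  then consider "i < j" | "j < i" by linarith
  then show False
  proof cases
    case 1
    then obtain d where "j = Suc (i + d)" using less_imp_Suc_add by blast
    then have d: "j = i + Suc d" by simp
    have "a * 2^i = b * 2^(i + Suc d)" using assms(3) unfolding d .
    then show False using pow_odd_aux[OF assms(1)] by blast
  next
    case 2
    then obtain d where "i = Suc (j + d)" using less_imp_Suc_add by blast
    then have d: "i = j + Suc d" by simp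
    have "b * 2^j = a * 2^(j + Suc d)" using assms(3) unfolding d by (rule sym)
    then show False using pow_odd_aux[OF assms(2)] by blast
  qed
qed

theorem lemma4p5:
  fixes K L :: nat
  assumes "odd K" and "odd L" and "K \<ge> 9" and "L \<ge> 9"
    and "TM_equiv K L"
  shows "ell K = ell L"
proof -
  obtain a where a: "ell K \<ge> 3" "odd a" "3 * sigma_hat (2*K+1) * 2^(ell K - 1) = of_int a"
    using val_form[of K] assms by auto
  obtain b where b: "ell L \<ge> 3" "odd b" "3 * sigma_hat (2*L+1) * 2^(ell L - 1) = of_int b"
    using val_form[of L] assms by auto
  have eq: "sigma_hat (2*K+1) = sigma_hat (2*L+1)" using assms(5) unfolding TM_equiv_def .
  let ?x = "3 * sigma_hat (2*L+1)"
  have "real_of_int (a * 2^(ell L - 1)) = ?x * 2^(ell K - 1) * 2^(ell L - 1)"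
    using a(3) eq by simp
  also have "\<dots> = real_of_int (b * 2^(ell K - 1))" using b(3) by (simp add: algebra_simps)
  finally have "a * 2^(ell L - 1) = b * 2^(ell K - 1)" by (simp only: of_int_eq_iff)
  then have "ell L - 1 = ell K - 1" using pow_odd_eq a(2) b(2) by blast
  then show ?thesis using a(1) b(1) by simp
qed

end
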